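(* Let $\lambda=2\cos(\pi/5)$, $\pi=\lambda+2$, and work in $GL(2,\mathbb Z[\lambda]/5\mathbb Z[\lambda])$. Let $$a=I+\pi\begin{pmatrix}4&0\\4&1\end{pmatrix},\quad b=I+\pi\begin{pmatrix}1&1\\0&4\end{pmatrix},\quad c=I+\pi\begin{pmatrix}1&4\\0&4\end{pmatrix}$$ (entries taken modulo $5$), and let $\Delta=\{a,b,c\}$. Let $S=\begin{pmatrix}0&1\\-1&0\end{pmatrix}$, $T=\begin{pmatrix}1&\lambda\\0&1\end{pmatrix}$, $J=\begin{pmatrix}0&1\\1&0\end{pmatrix}$ (reduced modulo $5$). Then the only nontrivial subgroup of $\langle\Delta\rangle$ that is invariant under conjugation by each of $S$, $T$ and $J$ is $\langle\Delta\rangle$ itself.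
   Context: $\lambda=2\cos(\pi/5)$ satisfies $\lambda^2=\lambda+1$; $\mathbb Z[\lambda]$ is the ring of integers of $\mathbb Q(\sqrt5)$, and $5=(\lambda+2)^2\lambda^{-2}$ in $\mathbb Z[\lambda]$. *)

theory Defs
  imports "HOL-Algebra.Generated_Groups"
begin

text \<open>The ring Z[lambda]/5Z[lambda], lambda^2 = lambda + 1. Since Z[lambda] = Z + Z lambda,
  an element x + y lambda is represented by the pair (x mod 5, y mod 5).\<close>

type_synonym zl = "int \<times> int"

definition zl_norm :: "zl \<Rightarrow> zl" where
  "zl_norm p = (fst p mod 5, snd p mod 5)"

definition zl_add :: "zl \<Rightarrow> zl \<Rightarrow> zl" where
  "zl_add p q = zl_norm (fst p + fst q, snd p + snd q)"

definition zl_mul :: "zl \<Rightarrow> zl \<Rightarrow> zl" where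
  "zl_mul p q = zl_norm (fst p * fst q + snd p * snd q,
                         fst p * snd q + snd p * fst q + snd p * snd q)"

definition zl_of_int :: "int \<Rightarrow> zl" where
  "zl_of_int n = zl_norm (n, 0)"

definition zl_lambda :: zl where
  "zl_lambda = (0, 1)"

definition zl_pi :: zl where
  "zl_pi = zl_add zl_lambda (zl_of_int 2)"

definition zl_carrier :: "zl set" where
  "zl_carrier = {p. 0 \<le> fst p \<and> fst p < 5 \<and> 0 \<le> snd p \<and> snd p < 5}"

type_synonym mat2 = "zl \<times> zl \<times> zl \<times> zl"

definition mat_mul :: "mat2 \<Rightarrow> mat2 \<Rightarrow> mat2" where
  "mat_mul A B = (case A of (a11, a12, a21, a22) \<Rightarrow> case B of (b11, b12, b21, b22) \<Rightarrow>
     (zl_add (zl_mul a11 b11) (zl_mul a12 b21), zl_add (zl_mul a11 b12) (zl_mul a12 b22),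
      zl_add (zl_mul a21 b11) (zl_mul a22 b21), zl_add (zl_mul a21 b12) (zl_mul a22 b22)))"

definition mat_add :: "mat2 \<Rightarrow> mat2 \<Rightarrow> mat2" where
  "mat_add A B = (case A of (a11, a12, a21, a22) \<Rightarrow> case B of (b11, b12, b21, b22) \<Rightarrow>
     (zl_add a11 b11, zl_add a12 b12, zl_add a21 b21, zl_add a22 b22))"

definition mat_smult :: "zl \<Rightarrow> mat2 \<Rightarrow> mat2" where
  "mat_smult c A = (case A of (a11, a12, a21, a22) \<Rightarrow>
     (zl_mul c a11, zl_mul c a12, zl_mul c a21, zl_mul c a22))"

definition mat_of_ints :: "int \<Rightarrow> int \<Rightarrow> int \<Rightarrow> int \<Rightarrow> mat2" where
  "mat_of_ints x y z w = (zl_of_int x, zl_of_int y, zl_of_int z, zl_of_int w)"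

definition mat_one :: mat2 where
  "mat_one = mat_of_ints 1 0 0 1"

definition M2 :: "mat2 monoid" where
  "M2 = \<lparr>carrier = zl_carrier \<times> zl_carrier \<times> zl_carrier \<times> zl_carrier,
         mult = mat_mul, one = mat_one\<rparr>"

definition GL2 :: "mat2 monoid" where
  "GL2 = units_of M2"

definition gen_a :: mat2 where
  "gen_a = mat_add mat_one (mat_smult zl_pi (mat_of_ints 4 0 4 1))"
definition gen_b :: mat2 where
  "gen_b = mat_add mat_one (mat_smult zl_pi (mat_of_ints 1 1 0 4))"
definition gen_c :: mat2 where
  "gen_c = mat_add mat_one (mat_smult zl_pi (mat_of_ints 1 4 0 4))"

definition Delta :: "mat2 set" where
  "Delta = {gen_a, gen_b, gen_c}"

definition mat_S :: mat2 where
  "mat_S = mat_of_ints 0 1 (-1) 0"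
definition mat_T :: mat2 where
  "mat_T = (zl_of_int 1, zl_lambda, zl_of_int 0, zl_of_int 1)"
definition mat_J :: mat2 where
  "mat_J = mat_of_ints 0 1 1 0"

end

theory Submission
  imports Defs
begin

locale qsp =
  fixes Q :: "int \<Rightarrow> int \<Rightarrow> int \<Rightarrow> bool"
  assumes cong: "\<And>x y z x' y' z'. Q x y z \<Longrightarrow> x mod 5 = x' mod 5 \<Longrightarrow> y mod 5 = y' mod 5
                  \<Longrightarrow> z mod 5 = z' mod 5 \<Longrightarrow> Q x' y' z'"
    and add: "\<And>x y z x' y' z'. Q x y z \<Longrightarrow> Q x' y' z' \<Longrightarrow> Q (x+x') (y+y') (z+z')"
begin

lemma sm: "0 < k \<Longrightarrow> Q x y z \<Longrightarrow> Q (int k * x) (int k * y) (int k * z)"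
proof (induction k)
  case 0 then show ?case by simp
next
  case (Suc k)
  show ?case
  proof (cases "k = 0")
    case True then show ?thesis using Suc by simp
  next
    case False
    then have "Q (int k * x) (int k * y) (int k * z)" using Suc by simp
    from add[OF this Suc.prems(2)] show ?thesis by (simp add: algebra_simps)
  qed
qed

lemma span:
  assumes e1: "Q 1 0 0" and e2: "Q 0 1 0" and e3: "Q 0 0 1"
  shows "Q x y z"
proof -
  define a where "a = nat (x mod 5) + 5"
  define b where "b = nat (y mod 5) + 5"
  define c where "c = nat (z mod 5) + 5"
  have A: "Q (int a * 1) (int a * 0) (int a * 0)" by (rule sm[OF _ e1]) (simp add: a_def)
  have B: "Q (int b * 0) (int b * 1) (int b * 0)" by (rule sm[OF _ e2]) (simp add: b_def)
  have C: "Q (int c * 0) (int c * 0) (int c * 1)" by (rule sm[OF _ e3]) (simp add: c_def)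
  have "Q (int a * 1 + int b * 0 + int c * 0) (int a * 0 + int b * 1 + int c * 0) (int a * 0 + int b * 0 + int c * 1)"
    using add[OF add[OF A B] C] .
  then show ?thesis
    by (rule cong) (simp_all add: a_def b_def c_def)
qed

lemma neg: assumes "Q x y z" shows "Q (-x) (-y) (-z)"
proof -
  have "Q (int 4 * x) (int 4 * y) (int 4 * z)" by (rule sm[OF _ assms]) simp
  then show ?thesis by (rule cong) presburger+
qed

lemma sub: "Q a1 a2 a3 \<Longrightarrow> Q b1 b2 b3 \<Longrightarrow> Q (a1-b1) (a2-b2) (a3-b3)"
  using add[OF _ neg] by fastforce

end

locale qirr = qsp +
  assumes T: "\<And>x y z. Q x y z \<Longrightarrow> Q (x+3*z) (y-x+z) z"
    and J: "\<And>x y z. Q x y z \<Longrightarrow> Q (-x) z y"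
begin

lemma td: assumes "Q x y z" shows "Q (3*z) (z - x) 0"
proof -
  have "Q (x+3*z-x) (y-x+z-y) (z-z)" by (rule sub[OF T[OF assms] assms])
  then show ?thesis by (rule cong) presburger+
qed

lemma allQ:
  assumes q0: "Q x0 y0 z0" and nz: "\<not> (x0 mod 5 = 0 \<and> y0 mod 5 = 0 \<and> z0 mod 5 = 0)"
  shows "Q x y z"
proof -
  obtain c where c: "Q 0 c 0" "c mod 5 \<noteq> 0"
  proof (cases "z0 mod 5 = 0")
    case False
    have "Q (3*0) (0 - 3*z0) 0" using td[OF td[OF q0]] by simp
    then have "Q 0 (-3*z0) 0" by (rule cong) simp_all
    moreover have "(-3*z0) mod 5 \<noteq> 0" using False by presburger
    ultimately show ?thesis using that by blast
  next
    case True
    show ?thesis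
    proof (cases "x0 mod 5 = 0")
      case False
      have "Q 0 (z0 - x0) 0" using td[OF q0] by (rule cong) (use True in presburger)+
      moreover have "(z0 - x0) mod 5 \<noteq> 0" using False True by presburger
      ultimately show ?thesis using that by blast
    next
      case x: True
      have "Q 0 y0 0" using q0 by (rule cong) (use True x in presburger)+
      moreover have "y0 mod 5 \<noteq> 0" using nz True x by simp
      ultimately show ?thesis using that by blast
    qed
  qed
  have e2: "Q 0 1 0"
  proof -
    have "c mod 5 = 1 \<or> c mod 5 = 2 \<or> c mod 5 = 3 \<or> c mod 5 = 4" using c(2) by presburger
    moreover have m1: "Q (int 1 * 0) (int 1 * c) (int 1 * 0)" and m2: "Q (int 2 * 0) (int 2 * c) (int 2 * 0)"
       and m3: "Q (int 3 * 0) (int 3 * c) (int 3 * 0)" and m4: "Q (int 4 * 0) (int 4 * c) (int 4 * 0)"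
      by (rule sm[OF _ c(1)]; simp)+
    ultimately show ?thesis
    proof (elim disjE)
      assume h: "c mod 5 = 1" show ?thesis using m1 by (rule cong) (use h in simp)+
    next
      assume h: "c mod 5 = 2" show ?thesis using m3 by (rule cong) (use h in presburger)+
    next
      assume h: "c mod 5 = 3" show ?thesis using m2 by (rule cong) (use h in presburger)+
    next
      assume h: "c mod 5 = 4" show ?thesis using m4 by (rule cong) (use h in presburger)+
    qed
  qed
  have e3: "Q 0 0 1" using J[OF e2] by simp
  have "Q (0+3*1) (0-0+1) 1" using T[OF e3] .
  then have "Q 3 1 1" by simp
  from sub[OF sub[OF this e2] e3] have q3: "Q 3 0 0" by simp
  have "Q (int 2 * 3) (int 2 * 0) (int 2 * 0)" by (rule sm[OF _ q3]) simp
  then have e1: "Q 1 0 0" by (rule cong) simp_all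
  show ?thesis using span[OF e1 e2 e3] .
qed

end

lemma modI: "\<exists>k. (P::int) - Q = 5*k \<Longrightarrow> P mod 5 = Q mod 5"
  by (metis mod_eq_dvd_iff dvd_def)

lemmas unf = mat_mul_def zl_add_def zl_mul_def zl_norm_def prod.case fst_conv snd_conv prod.inject

definition elt :: "int \<Rightarrow> int \<Rightarrow> int \<Rightarrow> mat2" where
  "elt x y z = (((1+2*x) mod 5, x mod 5), ((2*y) mod 5, y mod 5), ((2*z) mod 5, z mod 5),
               ((1-2*x) mod 5, (-x) mod 5))"

definition Sinv :: mat2 where "Sinv = mat_of_ints 0 (-1) 1 0"
definition Tinv :: mat2 where "Tinv = (zl_of_int 1, zl_norm (0,-1), zl_of_int 0, zl_of_int 1)"

lemma elt_mul: "mat_mul (elt x y z) (elt x' y' z') = elt (x+x') (y+y') (z+z')"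
  unfolding elt_def
  apply (simp only: unf)
  apply (intro conjI; rule modI; simp only: minus_div_mult_eq_mod[symmetric]; algebra)
  done

lemma elt_mod: "elt x y z = elt (x mod 5) (y mod 5) (z mod 5)"
  unfolding elt_def
  apply (simp only: prod.inject)
  apply (intro conjI; rule modI; simp only: minus_div_mult_eq_mod[symmetric]; algebra)
  done

lemma conjS: "mat_mul (mat_mul mat_S (elt x y z)) Sinv = elt (-x) (-z) (-y)"
  unfolding elt_def mat_S_def Sinv_def mat_of_ints_def zl_of_int_def
  apply (simp only: unf)
  apply (intro conjI; rule modI; simp only: minus_div_mult_eq_mod[symmetric]; algebra)
  done

lemma conjT: "mat_mul (mat_mul mat_T (elt x y z)) Tinv = elt (x+3*z) (y-x+z) z"
  unfolding elt_def mat_T_def Tinv_def zl_lambda_def zl_of_int_def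
  apply (simp only: unf)
  apply (intro conjI; rule modI; simp only: minus_div_mult_eq_mod[symmetric]; algebra)
  done

lemma conjJ: "mat_mul (mat_mul mat_J (elt x y z)) mat_J = elt (-x) z y"
  unfolding elt_def mat_J_def mat_of_ints_def zl_of_int_def
  apply (simp only: unf)
  apply (intro conjI; rule modI; simp only: minus_div_mult_eq_mod[symmetric]; algebra)
  done

lemma gens: "gen_a = elt 4 0 4" "gen_b = elt 1 1 0" "gen_c = elt 1 4 0"
  by (simp_all add: gen_a_def gen_b_def gen_c_def elt_def mat_add_def mat_smult_def zl_pi_def
      zl_add_def zl_mul_def zl_norm_def zl_of_int_def zl_lambda_def mat_one_def mat_of_ints_def)

lemma invs: "mat_mul mat_S Sinv = mat_one" "mat_mul Sinv mat_S = mat_one"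
  "mat_mul mat_T Tinv = mat_one" "mat_mul Tinv mat_T = mat_one"
  "mat_mul mat_J mat_J = mat_one" "elt 0 0 0 = mat_one"
  by (simp_all add: mat_S_def Sinv_def mat_T_def Tinv_def mat_J_def elt_def unf
      zl_of_int_def zl_lambda_def mat_one_def mat_of_ints_def)



lemma assoc0: "mat_mul (mat_mul ((a1,a2),(a3,a4),(a5,a6),(a7,a8)) ((b1,b2),(b3,b4),(b5,b6),(b7,b8))) ((c1,c2),(c3,c4),(c5,c6),(c7,c8))
   = mat_mul ((a1,a2),(a3,a4),(a5,a6),(a7,a8)) (mat_mul ((b1,b2),(b3,b4),(b5,b6),(b7,b8)) ((c1,c2),(c3,c4),(c5,c6),(c7,c8)))"
  apply (simp only: unf)
  apply (intro conjI; rule modI; simp only: minus_div_mult_eq_mod[symmetric]; algebra)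
  done

lemma tup: obtains a1 a2 a3 a4 a5 a6 a7 a8 where "(A::mat2) = ((a1,a2),(a3,a4),(a5,a6),(a7,a8))"
  by (metis prod.collapse)

lemma assoc: "mat_mul (mat_mul A B) C = mat_mul A (mat_mul B C)"
  by (cases A rule: tup; cases B rule: tup; cases C rule: tup) (simp only: assoc0)

lemma M2_simps [simp]: "carrier M2 = zl_carrier \<times> zl_carrier \<times> zl_carrier \<times> zl_carrier"
  "mult M2 = mat_mul" "one M2 = mat_one"
  by (simp_all add: M2_def)

lemma mul_carrier: "mat_mul A B \<in> carrier M2"
  by (cases A rule: tup; cases B rule: tup) (simp add: unf zl_carrier_def)

lemma one_l: "A \<in> carrier M2 \<Longrightarrow> mat_mul mat_one A = A"
  by (cases A rule: tup) (simp add: unf zl_carrier_def mat_one_def mat_of_ints_def zl_of_int_def)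

lemma one_r: "A \<in> carrier M2 \<Longrightarrow> mat_mul A mat_one = A"
  by (cases A rule: tup) (simp add: unf zl_carrier_def mat_one_def mat_of_ints_def zl_of_int_def)

lemma one_carrier: "mat_one \<in> carrier M2"
  by (simp add: mat_one_def mat_of_ints_def zl_of_int_def zl_norm_def zl_carrier_def)

lemma mon: "monoid M2"
proof (rule monoidI)
  show "\<And>x y. x \<in> carrier M2 \<Longrightarrow> y \<in> carrier M2 \<Longrightarrow> x \<otimes>\<^bsub>M2\<^esub> y \<in> carrier M2"
    by (simp only: M2_simps(2)) (rule mul_carrier)
  show "\<one>\<^bsub>M2\<^esub> \<in> carrier M2" by (simp only: M2_simps(3)) (rule one_carrier)
  show "\<And>x y z. x \<otimes>\<^bsub>M2\<^esub> y \<otimes>\<^bsub>M2\<^esub> z = x \<otimes>\<^bsub>M2\<^esub> (y \<otimes>\<^bsub>M2\<^esub> z)"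
    by (simp only: M2_simps(2)) (rule assoc)
  show "\<And>x. x \<in> carrier M2 \<Longrightarrow> \<one>\<^bsub>M2\<^esub> \<otimes>\<^bsub>M2\<^esub> x = x"
    by (simp only: M2_simps(2,3)) (rule one_l)
  show "\<And>x. x \<in> carrier M2 \<Longrightarrow> x \<otimes>\<^bsub>M2\<^esub> \<one>\<^bsub>M2\<^esub> = x"
    by (simp only: M2_simps(2,3)) (rule one_r)
qed

lemma grp: "group GL2"
  unfolding GL2_def by (rule monoid.units_group[OF mon])

lemma GL_simps [simp]: "carrier GL2 = Units M2" "mult GL2 = mat_mul" "one GL2 = mat_one"
  by (simp_all add: GL2_def units_of_def)

lemma unitI: "A \<in> carrier M2 \<Longrightarrow> B \<in> carrier M2 \<Longrightarrow> mat_mul A B = mat_one \<Longrightarrow> mat_mul B A = mat_one \<Longrightarrow> A \<in> Units M2"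
  unfolding Units_def by auto

lemma invI: "A \<in> Units M2 \<Longrightarrow> B \<in> Units M2 \<Longrightarrow> mat_mul B A = mat_one \<Longrightarrow> inv\<^bsub>GL2\<^esub> A = B"
  using group.inv_equality[OF grp, of B A] by simp

lemma elt_carrier: "elt x y z \<in> carrier M2"
  by (simp add: elt_def zl_carrier_def)

lemma elt_unit: "elt x y z \<in> Units M2"
  by (rule unitI[OF elt_carrier elt_carrier, of _ _ _ "-x" "-y" "-z"]) (simp_all add: elt_mul invs)

lemma elt_inv: "inv\<^bsub>GL2\<^esub> (elt x y z) = elt (-x) (-y) (-z)"
  by (rule invI[OF elt_unit elt_unit]) (simp add: elt_mul invs)

lemma carrs: "mat_S \<in> carrier M2" "Sinv \<in> carrier M2" "mat_T \<in> carrier M2" "Tinv \<in> carrier M2"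
  "mat_J \<in> carrier M2"
  by (simp_all add: mat_S_def Sinv_def mat_T_def Tinv_def mat_J_def mat_of_ints_def zl_of_int_def
       zl_norm_def zl_lambda_def zl_carrier_def)

lemma units: "mat_S \<in> Units M2" "Sinv \<in> Units M2" "mat_T \<in> Units M2" "Tinv \<in> Units M2" "mat_J \<in> Units M2"
  by (rule unitI[OF carrs(1) carrs(2) invs(1) invs(2)] unitI[OF carrs(2) carrs(1) invs(2) invs(1)]
      unitI[OF carrs(3) carrs(4) invs(3) invs(4)] unitI[OF carrs(4) carrs(3) invs(4) invs(3)]
      unitI[OF carrs(5) carrs(5) invs(5) invs(5)])+

lemma ginvs: "inv\<^bsub>GL2\<^esub> mat_S = Sinv" "inv\<^bsub>GL2\<^esub> mat_T = Tinv" "inv\<^bsub>GL2\<^esub> mat_J = mat_J"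
  by (rule invI; (rule units)?; simp add: invs)+

definition E :: "mat2 set" where "E = {elt x y z | x y z. True}"

lemma Delta_E: "Delta \<subseteq> E"
  unfolding Delta_def E_def gens by blast

lemma elt_in_E: "elt x y z \<in> E"
  unfolding E_def by blast

lemma E_cases: "h \<in> E \<Longrightarrow> \<exists>x y z. h = elt x y z"
  unfolding E_def by blast

lemma elt_cong: "x mod 5 = x' mod 5 \<Longrightarrow> y mod 5 = y' mod 5 \<Longrightarrow> z mod 5 = z' mod 5 \<Longrightarrow> elt x y z = elt x' y' z'"
  by (metis elt_mod)

lemma genE: "generate GL2 Delta = E"
proof
  show "generate GL2 Delta \<subseteq> E"
  proof
    fix h assume "h \<in> generate GL2 Delta"
    then show "h \<in> E"
    proof induction
      case one then show ?case by (simp add: invs(6)[symmetric] elt_in_E)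
    next
      case (incl h) then show ?case using Delta_E by auto
    next
      case (inv h) then obtain x y z where "h = elt x y z" using Delta_E E_cases by blast
      then show ?case by (simp add: elt_inv elt_in_E)
    next
      case (eng h1 h2)
      obtain x y z where 1: "h1 = elt x y z" using E_cases[OF eng.IH(1)] by blast
      obtain x' y' z' where 2: "h2 = elt x' y' z'" using E_cases[OF eng.IH(2)] by blast
      show ?case by (simp add: 1 2 elt_mul elt_in_E)
    qed
  qed
next
  let ?G = "generate GL2 Delta"
  have DC: "Delta \<subseteq> carrier GL2" using Delta_E by (auto simp: E_def elt_unit)
  have sg: "subgroup ?G GL2" by (rule group.generate_is_subgroup[OF grp DC])
  interpret q: qsp "\<lambda>x y z. elt x y z \<in> ?G"
  proof
    fix x y z x' y' z' :: int
    show "elt x y z \<in> ?G \<Longrightarrow> x mod 5 = x' mod 5 \<Longrightarrow> y mod 5 = y' mod 5 \<Longrightarrow> z mod 5 = z' mod 5 \<Longrightarrow> elt x' y' z' \<in> ?G"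
      using elt_cong by metis
    show "elt x y z \<in> ?G \<Longrightarrow> elt x' y' z' \<in> ?G \<Longrightarrow> elt (x + x') (y + y') (z + z') \<in> ?G"
      using subgroup.m_closed[OF sg, of "elt x y z" "elt x' y' z'"] by (simp add: elt_mul)
  qed
  have a: "elt 4 0 4 \<in> ?G" and b: "elt 1 1 0 \<in> ?G" and c: "elt 1 4 0 \<in> ?G"
    using generate.incl[of _ Delta GL2] by (auto simp: Delta_def gens)
  have "elt (int 3 * 1 + int 3 * 1) (int 3 * 1 + int 3 * 4) (int 3 * 0 + int 3 * 0) \<in> ?G"
    by (rule q.add; rule q.sm; (rule b | rule c | simp))
  then have e1: "elt 1 0 0 \<in> ?G" by (rule q.cong) simp_all
  have "elt (int 3 * 1 + int 12 * 1) (int 3 * 1 + int 12 * 4) (int 3 * 0 + int 12 * 0) \<in> ?G"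
    by (rule q.add; rule q.sm; (rule b | rule c | simp))
  then have e2: "elt 0 1 0 \<in> ?G" by (rule q.cong) simp_all
  have "elt (int 4 * 4 + int 4 * 1) (int 4 * 0 + int 4 * 0) (int 4 * 4 + int 4 * 0) \<in> ?G"
    by (rule q.add; rule q.sm; (rule a | rule e1 | simp))
  then have e3: "elt 0 0 1 \<in> ?G" by (rule q.cong) simp_all
  show "E \<subseteq> ?G" using q.span[OF e1 e2 e3] E_cases by blast
qed

lemma img_sub:
  assumes "\<And>x y z. f (elt x y z) \<in> E" shows "f ` E \<subseteq> E"
proof
  fix h' assume "h' \<in> f ` E"
  then obtain h where "h \<in> E" "h' = f h" by blast
  moreover obtain x y z where "h = elt x y z" using E_cases[OF \<open>h \<in> E\<close>] by blast
  ultimately show "h' \<in> E" using assms by simp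
qed

lemma conjs: "mat_S \<otimes>\<^bsub>GL2\<^esub> h \<otimes>\<^bsub>GL2\<^esub> inv\<^bsub>GL2\<^esub> mat_S = mat_mul (mat_mul mat_S h) Sinv"
  "mat_T \<otimes>\<^bsub>GL2\<^esub> h \<otimes>\<^bsub>GL2\<^esub> inv\<^bsub>GL2\<^esub> mat_T = mat_mul (mat_mul mat_T h) Tinv"
  "mat_J \<otimes>\<^bsub>GL2\<^esub> h \<otimes>\<^bsub>GL2\<^esub> inv\<^bsub>GL2\<^esub> mat_J = mat_mul (mat_mul mat_J h) mat_J"
  by (simp_all add: ginvs)

lemma imgE: "g \<in> {mat_S, mat_T, mat_J} \<Longrightarrow> (\<lambda>h. g \<otimes>\<^bsub>GL2\<^esub> h \<otimes>\<^bsub>GL2\<^esub> inv\<^bsub>GL2\<^esub> g) ` E = E"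
proof (elim insertE emptyE)
  assume g: "g = mat_S"
  show ?thesis unfolding g conjs
  proof
    show "(\<lambda>h. mat_mul (mat_mul mat_S h) Sinv) ` E \<subseteq> E" by (rule img_sub) (simp only: conjS elt_in_E)
    show "E \<subseteq> (\<lambda>h. mat_mul (mat_mul mat_S h) Sinv) ` E"
    proof
      fix h assume "h \<in> E" then obtain x y z where h: "h = elt x y z" using E_cases by blast
      have "h = mat_mul (mat_mul mat_S (elt (-x) (-z) (-y))) Sinv" by (simp add: conjS h)
      then show "h \<in> (\<lambda>h. mat_mul (mat_mul mat_S h) Sinv) ` E" by (rule image_eqI[OF _ elt_in_E])
    qed
  qed
next
  assume g: "g = mat_T"
  show ?thesis unfolding g conjs
  proof
    show "(\<lambda>h. mat_mul (mat_mul mat_T h) Tinv) ` E \<subseteq> E" by (rule img_sub) (simp only: conjT elt_in_E)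
    show "E \<subseteq> (\<lambda>h. mat_mul (mat_mul mat_T h) Tinv) ` E"
    proof
      fix h assume "h \<in> E" then obtain x y z where h: "h = elt x y z" using E_cases by blast
      have "h = mat_mul (mat_mul mat_T (elt (x-3*z) (y+x-4*z) z)) Tinv" by (simp add: conjT h algebra_simps)
      then show "h \<in> (\<lambda>h. mat_mul (mat_mul mat_T h) Tinv) ` E" by (rule image_eqI[OF _ elt_in_E])
    qed
  qed
next
  assume g: "g = mat_J"
  show ?thesis unfolding g conjs
  proof
    show "(\<lambda>h. mat_mul (mat_mul mat_J h) mat_J) ` E \<subseteq> E" by (rule img_sub) (simp only: conjJ elt_in_E)
    show "E \<subseteq> (\<lambda>h. mat_mul (mat_mul mat_J h) mat_J) ` E"
    proof
      fix h assume "h \<in> E" then obtain x y z where h: "h = elt x y z" using E_cases by blast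
      have "h = mat_mul (mat_mul mat_J (elt (-x) z y)) mat_J" by (simp add: conjJ h)
      then show "h \<in> (\<lambda>h. mat_mul (mat_mul mat_J h) mat_J) ` E" by (rule image_eqI[OF _ elt_in_E])
    qed
  qed
qed

lemma part2:
  assumes sg: "subgroup H GL2" and HE: "H \<subseteq> E" and nt: "H \<noteq> {\<one>\<^bsub>GL2\<^esub>}"
    and inv: "\<forall>g\<in>{mat_S, mat_T, mat_J}. (\<lambda>h. g \<otimes>\<^bsub>GL2\<^esub> h \<otimes>\<^bsub>GL2\<^esub> inv\<^bsub>GL2\<^esub> g) ` H = H"
  shows "H = E"
proof -
  have iS: "\<And>h. h \<in> H \<Longrightarrow> mat_mul (mat_mul mat_S h) Sinv \<in> H"
    using inv conjs(1) by (metis (no_types, lifting) image_eqI insertI1)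
  have iT: "\<And>h. h \<in> H \<Longrightarrow> mat_mul (mat_mul mat_T h) Tinv \<in> H"
    using inv conjs(2) by (metis (no_types, lifting) image_eqI insertI1 insertI2)
  have iJ: "\<And>h. h \<in> H \<Longrightarrow> mat_mul (mat_mul mat_J h) mat_J \<in> H"
    using inv conjs(3) by (metis (no_types, lifting) image_eqI insertI1 insertI2)
  interpret q: qirr "\<lambda>x y z. elt x y z \<in> H"
  proof
    fix x y z x' y' z' :: int
    show "elt x y z \<in> H \<Longrightarrow> x mod 5 = x' mod 5 \<Longrightarrow> y mod 5 = y' mod 5 \<Longrightarrow> z mod 5 = z' mod 5 \<Longrightarrow> elt x' y' z' \<in> H"
      using elt_cong by metis
    show "elt x y z \<in> H \<Longrightarrow> elt x' y' z' \<in> H \<Longrightarrow> elt (x + x') (y + y') (z + z') \<in> H"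
      using subgroup.m_closed[OF sg, of "elt x y z" "elt x' y' z'"] by (simp add: elt_mul)
  next
    fix x y z :: int
    show "elt x y z \<in> H \<Longrightarrow> elt (x + 3 * z) (y - x + z) z \<in> H" using iT[of "elt x y z"] by (simp add: conjT)
    show "elt x y z \<in> H \<Longrightarrow> elt (- x) z y \<in> H" using iJ[of "elt x y z"] by (simp add: conjJ)
  qed
  have one: "mat_one \<in> H" using subgroup.one_closed[OF sg] by simp
  have "\<exists>h\<in>H. h \<noteq> mat_one"
  proof (rule ccontr)
    assume "\<not> (\<exists>h\<in>H. h \<noteq> mat_one)"
    then have "H = {mat_one}" using one by blast
    then show False using nt by simp
  qed
  then obtain h where h: "h \<in> H" "h \<noteq> mat_one" by blast
  then obtain x y z where hx: "h = elt x y z" using HE E_cases by blast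
  have nz: "\<not> (x mod 5 = 0 \<and> y mod 5 = 0 \<and> z mod 5 = 0)"
  proof
    assume "x mod 5 = 0 \<and> y mod 5 = 0 \<and> z mod 5 = 0"
    then have "h = elt 0 0 0" unfolding hx by (intro elt_cong) simp_all
    then show False using h invs(6) by simp
  qed
  have all: "\<And>x y z. elt x y z \<in> H" by (rule q.allQ[OF h(1)[unfolded hx] nz])
  have "Delta \<subseteq> H" using all unfolding Delta_def gens by blast
  then have "generate GL2 Delta \<subseteq> H" by (rule group.generate_subgroup_incl[OF grp _ sg])
  then show ?thesis using HE genE by auto
qed

theorem lemmaB1:
  "(\<forall>g\<in>{mat_S, mat_T, mat_J}.
      (\<lambda>h. g \<otimes>\<^bsub>GL2\<^esub> h \<otimes>\<^bsub>GL2\<^esub> inv\<^bsub>GL2\<^esub> g) ` generate GL2 Delta = generate GL2 Delta) \<and>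
   (\<forall>H. subgroup H GL2 \<and> H \<subseteq> generate GL2 Delta \<and> H \<noteq> {\<one>\<^bsub>GL2\<^esub>} \<and>
       (\<forall>g\<in>{mat_S, mat_T, mat_J}.
          (\<lambda>h. g \<otimes>\<^bsub>GL2\<^esub> h \<otimes>\<^bsub>GL2\<^esub> inv\<^bsub>GL2\<^esub> g) ` H = H)
     \<longrightarrow> H = generate GL2 Delta)"
  unfolding genE using imgE part2 by blast

end
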